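(* Fix integers $N\ge 2$ and $K\ge 1$. The class $M^{\text{DISTMULT}}$ is not universal, i.e. $\pi(\mathcal{M}^{\text{DISTMULT}})\ne\pi(\mathbb{R}^{N\times N\times K})$.
   Context: There are $N$ entities and $K$ relations. A score-based model assigns a score $s_k(i,j)\in\mathbb{R}$ to each triple, $i,j\in\{1,\dots,N\}$, $k\in\{1,\dots,K\}$; its scoring tensor $\mathcal{S}\in\mathbb{R}^{N\times N\times K}$ has frontal slices $\mathbf{S}_k$ with $[\mathbf{S}_k]_{ij}=s_k(i,j)$. For a real $N\times N$ matrix $\mathbf{S}$, $\pi(\mathbf{S})$ is the matrix of dense ranks: $\pi_{ij}(\mathbf{S})=1+$ (number of distinct values among entries of $\mathbf{S}$ strictly larger than $s_{ij}$). For tensors, $\pi$ acts slicewise; for a set $X$, $\pi(X)=\{\pi(x):x\in X\}$. DISTMULT of size $r$: parameters $\mathbf{A}\in\mathbb{R}^{N\times r}$ (rows $\mathbf{a}_i$), $\mathbf{R}\in\mathbb{R}^{K\times r}$ (rows $\mathbf{r}_k$), score $\mathbf{a}_i^T\mathrm{diag}(\mathbf{r}_k)\mathbf{a}_j$; $\mathcal{M}^{\text{DISTMULT}}$ is the set of scoring tensors of all DISTMULT models of all sizes $r\in\mathbb{N}^+$. *)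

theory Defs
  imports Complex_Main
begin

text \<open>An N x N x K real tensor is represented as a function of indices
  (i,j,k) with i,j in {1..N}, k in {1..K}; entries outside this range are 0.\<close>

definition in_range :: "nat \<Rightarrow> nat \<Rightarrow> nat \<Rightarrow> nat \<Rightarrow> nat \<Rightarrow> bool" where
  "in_range N K i j k \<longleftrightarrow> i \<in> {1..N} \<and> j \<in> {1..N} \<and> k \<in> {1..K}"

definition real_tensors :: "nat \<Rightarrow> nat \<Rightarrow> (nat \<Rightarrow> nat \<Rightarrow> nat \<Rightarrow> real) set" where
  "real_tensors N K = {S. \<forall>i j k. \<not> in_range N K i j k \<longrightarrow> S i j k = 0}"

definition slice_entries :: "nat \<Rightarrow> (nat \<Rightarrow> nat \<Rightarrow> nat \<Rightarrow> real) \<Rightarrow> nat \<Rightarrow> real set" where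
  "slice_entries N S k = {S i j k | i j. i \<in> {1..N} \<and> j \<in> {1..N}}"

definition dense_rank :: "nat \<Rightarrow> nat \<Rightarrow> (nat \<Rightarrow> nat \<Rightarrow> nat \<Rightarrow> real) \<Rightarrow> (nat \<Rightarrow> nat \<Rightarrow> nat \<Rightarrow> nat)" where
  "dense_rank N K S = (\<lambda>i j k. if in_range N K i j k
       then 1 + card {v \<in> slice_entries N S k. v > S i j k} else 0)"

text \<open>Scoring tensor of a DISTMULT model of size r with entity embeddings A (rows a_i,
  A i l = [a_i]_l, l in {1..r}) and relation embeddings R (R k l = [r_k]_l).\<close>
definition distmult_tensor :: "nat \<Rightarrow> nat \<Rightarrow> nat \<Rightarrow> (nat \<Rightarrow> nat \<Rightarrow> real) \<Rightarrow> (nat \<Rightarrow> nat \<Rightarrow> real)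
    \<Rightarrow> (nat \<Rightarrow> nat \<Rightarrow> nat \<Rightarrow> real)" where
  "distmult_tensor N K r A R = (\<lambda>i j k. if in_range N K i j k
       then (\<Sum>l\<in>{1..r}. A i l * R k l * A j l) else 0)"

definition distmult_class :: "nat \<Rightarrow> nat \<Rightarrow> (nat \<Rightarrow> nat \<Rightarrow> nat \<Rightarrow> real) set" where
  "distmult_class N K = {distmult_tensor N K r A R | r A R. r \<ge> 1}"

end

theory Submission
  imports Defs
begin

lemma dm_sym:
  assumes "D \<in> distmult_class N K"
  shows "D i j k = D j i k"
proof -
  from assms obtain r A R where D: "D = distmult_tensor N K r A R"
    unfolding distmult_class_def by blast
  have "in_range N K i j k = in_range N K j i k" unfolding in_range_def by blast
  then show ?thesis unfolding D distmult_tensor_def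
    by (auto intro!: sum.cong simp: mult.commute mult.left_commute)
qed

lemma dr_sym:
  assumes "D \<in> distmult_class N K"
  shows "dense_rank N K D i j k = dense_rank N K D j i k"
proof -
  have "in_range N K i j k = in_range N K j i k" unfolding in_range_def by blast
  then show ?thesis unfolding dense_rank_def using dm_sym[OF assms, of i j k] by simp
qed

theorem theorem8:
  fixes N K :: nat
  assumes "N \<ge> 2" and "K \<ge> 1"
  shows "dense_rank N K ` distmult_class N K \<noteq> dense_rank N K ` real_tensors N K"
proof
  assume eq: "dense_rank N K ` distmult_class N K = dense_rank N K ` real_tensors N K"
  define T :: "nat \<Rightarrow> nat \<Rightarrow> nat \<Rightarrow> real" where
    "T = (\<lambda>i j k. if i = 1 \<and> j = 2 \<and> k = 1 then 1 else 0)"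
  have r1: "in_range N K 1 2 1" and r2: "in_range N K 2 1 1"
    using assms unfolding in_range_def by auto
  have Tin: "T \<in> real_tensors N K"
    unfolding real_tensors_def T_def using r1 by auto
  have sub: "slice_entries N T 1 \<subseteq> {0, 1}"
    unfolding slice_entries_def T_def by auto
  have one: "(1::real) \<in> slice_entries N T 1"
    unfolding slice_entries_def T_def using assms
    by (auto intro!: exI[of _ 1] exI[of _ 2])
  have e1: "{v \<in> slice_entries N T 1. v > T 1 2 1} = {}"
    using sub unfolding T_def by auto
  have e2: "{v \<in> slice_entries N T 1. v > T 2 1 1} = {1}"
    using sub one unfolding T_def by auto
  have ne: "dense_rank N K T 1 2 1 \<noteq> dense_rank N K T 2 1 1"
    unfolding dense_rank_def using r1 r2 by (simp only: if_True e1 e2) simp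
  have "dense_rank N K T \<in> dense_rank N K ` distmult_class N K"
    using eq Tin by auto
  then obtain D where D: "D \<in> distmult_class N K" "dense_rank N K T = dense_rank N K D"
    by auto
  show False using ne dr_sym[OF D(1), of 1 2 1] D(2) by simp
qed

end
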